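(* Let $G$ be a finite simple graph with a clique vertex-partition $\Pi=\{W_1,\dots,W_p\}$, and let $t\ge 2$ be an integer. Then (1) $\dim \mathrm{CF}_t(G(\Pi,t)) = p(t-1)-1$, and (2) $\mathrm{CF}_t(G(\Pi,t))$ is pure.
   Context: A clique vertex-partition of $G$ is a collection $\Pi=\{W_1,\dots,W_p\}$ of pairwise disjoint (possibly empty) vertex sets each inducing a clique in $G$, whose union is $V(G)$. The $t$-clique whiskering $G(\Pi,t)$ is obtained from $G$ by adding, for each $1\le i\le p$, $t-1$ new distinct vertices $x_{i,1},\dots,x_{i,t-1}$ (all new vertices distinct from each other and from $V(G)$) and adding edges so that $W_i\cup\{x_{i,1},\dots,x_{i,t-1}\}$ becomes a clique; no other edges are added. $\mathrm{CF}_t(\cdot)$ is the simplicial complex on the vertex set whose faces are the vertex subsets inducing no clique on $t$ vertices. The dimension of a complex is the maximum of $|F|-1$ over faces $F$; a complex is pure if all facets have the same dimension. *)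

theory Defs
  imports Main
begin

definition simple_graph :: "'a set \<Rightarrow> ('a \<Rightarrow> 'a \<Rightarrow> bool) \<Rightarrow> bool" where
  "simple_graph V E \<longleftrightarrow> finite V \<and> (\<forall>x y. E x y \<longrightarrow> x \<in> V \<and> y \<in> V)
     \<and> (\<forall>x y. E x y \<longrightarrow> E y x) \<and> (\<forall>x. \<not> E x x)"

definition is_clique :: "'a set \<Rightarrow> ('a \<Rightarrow> 'a \<Rightarrow> bool) \<Rightarrow> 'a set \<Rightarrow> bool" where
  "is_clique V E S \<longleftrightarrow> S \<subseteq> V \<and> (\<forall>x\<in>S. \<forall>y\<in>S. x \<noteq> y \<longrightarrow> E x y)"

text \<open>A clique vertex-partition W_0, ..., W_(p-1) (possibly empty blocks).\<close>

definition clique_vertex_partition ::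
  "'a set \<Rightarrow> ('a \<Rightarrow> 'a \<Rightarrow> bool) \<Rightarrow> nat \<Rightarrow> (nat \<Rightarrow> 'a set) \<Rightarrow> bool" where
  "clique_vertex_partition V E p W \<longleftrightarrow>
     (\<forall>i<p. is_clique V E (W i)) \<and>
     (\<forall>i<p. \<forall>j<p. i \<noteq> j \<longrightarrow> W i \<inter> W j = {}) \<and>
     (\<Union>i<p. W i) = V"

text \<open>t-clique whiskering: old vertices are Inl v, new vertex x_{i,j} is Inr (i,j)
with i < p and j < t - 1.\<close>

definition whisker_vertices :: "'a set \<Rightarrow> nat \<Rightarrow> nat \<Rightarrow> ('a + nat \<times> nat) set" where
  "whisker_vertices V p t = Inl ` V \<union> Inr ` {(i, j). i < p \<and> j < t - 1}"

fun whisker_edges ::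
  "('a \<Rightarrow> 'a \<Rightarrow> bool) \<Rightarrow> nat \<Rightarrow> (nat \<Rightarrow> 'a set) \<Rightarrow> nat \<Rightarrow>
   ('a + nat \<times> nat) \<Rightarrow> ('a + nat \<times> nat) \<Rightarrow> bool" where
  "whisker_edges E p W t (Inl u) (Inl v) = E u v"
| "whisker_edges E p W t (Inl u) (Inr (i, j)) = (i < p \<and> j < t - 1 \<and> u \<in> W i)"
| "whisker_edges E p W t (Inr (i, j)) (Inl u) = (i < p \<and> j < t - 1 \<and> u \<in> W i)"
| "whisker_edges E p W t (Inr (i, j)) (Inr (i', j')) =
     (i < p \<and> j < t - 1 \<and> i' = i \<and> j' < t - 1 \<and> j \<noteq> j')"

definition clique_free_complex :: "'b set \<Rightarrow> ('b \<Rightarrow> 'b \<Rightarrow> bool) \<Rightarrow> nat \<Rightarrow> 'b set set" where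
  "clique_free_complex V E t =
     {F. F \<subseteq> V \<and> \<not> (\<exists>S. S \<subseteq> F \<and> card S = t \<and> is_clique V E S)}"

definition complex_dim :: "'b set set \<Rightarrow> int" where
  "complex_dim K = Max ((\<lambda>F. int (card F) - 1) ` K)"

definition facets :: "'b set set \<Rightarrow> 'b set set" where
  "facets K = {F \<in> K. \<forall>G\<in>K. F \<subseteq> G \<longrightarrow> G = F}"

definition pure_complex :: "'b set set \<Rightarrow> bool" where
  "pure_complex K \<longleftrightarrow> (\<forall>F\<in>facets K. \<forall>G\<in>facets K. int (card F) - 1 = int (card G) - 1)"

end

theory Submission
  imports Defs
begin

theorem theorem4p8:
  fixes V :: "'a set" and E :: "'a \<Rightarrow> 'a \<Rightarrow> bool"
    and p :: nat and W :: "nat \<Rightarrow> 'a set" and t :: nat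
  assumes "simple_graph V E"
    and "clique_vertex_partition V E p W"
    and "t \<ge> 2"
  shows "complex_dim (clique_free_complex (whisker_vertices V p t) (whisker_edges E p W t) t)
           = int p * (int t - 1) - 1
         \<and> pure_complex (clique_free_complex (whisker_vertices V p t) (whisker_edges E p W t) t)"
proof -
  define WV where "WV = whisker_vertices V p t"
  define WE where "WE = whisker_edges E p W t"
  define K where "K = clique_free_complex WV WE t"
  define B where "B i = Inl ` W i \<union> Inr ` ({i} \<times> {..<t-1})" for i
  have finV: "finite V" using assms(1) by (simp add: simple_graph_def)
  have Wcl: "\<And>i. i < p \<Longrightarrow> is_clique V E (W i)"
    and Wdisj: "\<And>i j. i < p \<Longrightarrow> j < p \<Longrightarrow> i \<noteq> j \<Longrightarrow> W i \<inter> W j = {}"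
    and Wun: "(\<Union>i<p. W i) = V"
    using assms(2) by (auto simp: clique_vertex_partition_def)
  have WsubV: "\<And>i. i < p \<Longrightarrow> W i \<subseteq> V" using Wcl by (auto simp: is_clique_def)
  have WVB: "WV = (\<Union>i<p. B i)"
  proof
    show "WV \<subseteq> (\<Union>i<p. B i)"
    proof
      fix x assume "x \<in> WV"
      then show "x \<in> (\<Union>i<p. B i)"
        unfolding WV_def whisker_vertices_def B_def using Wun by auto
    qed
    show "(\<Union>i<p. B i) \<subseteq> WV"
      unfolding WV_def whisker_vertices_def B_def using WsubV by auto
  qed
  have finWV: "finite WV" unfolding WV_def whisker_vertices_def using finV
    by (auto intro: finite_subset[of _ "{..<p} \<times> {..<t-1}"])
  have finB: "\<And>i. i < p \<Longrightarrow> finite (B i)" using WVB finWV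
    by (metis UN_upper finite_subset lessThan_iff)
  have Bdisj: "\<And>i j. i < p \<Longrightarrow> j < p \<Longrightarrow> i \<noteq> j \<Longrightarrow> B i \<inter> B j = {}"
    unfolding B_def using Wdisj by blast
  have Bcl: "is_clique WV WE (B i)" if "i < p" for i
    unfolding is_clique_def
  proof (intro conjI ballI impI)
    show "B i \<subseteq> WV" using WVB that by auto
  next
    fix x y assume xy: "x \<in> B i" "y \<in> B i" "x \<noteq> y"
    show "WE x y"
      using xy Wcl[OF that] that unfolding B_def WE_def is_clique_def by fastforce
  qed
  have subcl: "is_clique WV WE S" if "is_clique WV WE T" "S \<subseteq> T" for S T
    using that by (auto simp: is_clique_def)
  have Kle: "card (F \<inter> B i) \<le> t - 1" if "F \<in> K" "i < p" for F i
  proof (rule ccontr)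
    assume "\<not> ?thesis"
    hence "t \<le> card (F \<inter> B i)" by simp
    then obtain S where S: "S \<subseteq> F \<inter> B i" "card S = t"
      by (meson obtain_subset_with_card_n)
    have "is_clique WV WE S" using subcl[OF Bcl[OF \<open>i<p\<close>]] S by auto
    thus False using that(1) S unfolding K_def clique_free_complex_def by auto
  qed
  have cardF: "card F = (\<Sum>i<p. card (F \<inter> B i))" if "F \<subseteq> WV" for F
  proof -
    have "F = (\<Union>i<p. F \<inter> B i)" using that WVB by auto
    hence "card F = card (\<Union>i<p. F \<inter> B i)" by simp
    also have "\<dots> = (\<Sum>i<p. card (F \<inter> B i))"
      by (rule card_UN_disjoint) (use finB Bdisj in auto)
    finally show ?thesis .
  qed
  have Ksub: "F \<subseteq> WV" if "F \<in> K" for F using that by (simp add: K_def clique_free_complex_def)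
  have Kcard: "card F \<le> p * (t - 1)" if "F \<in> K" for F
  proof -
    have "card F = (\<Sum>i<p. card (F \<inter> B i))" using cardF Ksub that by blast
    also have "\<dots> \<le> (\<Sum>i<(p::nat). t - 1)" by (rule sum_mono) (use Kle that in auto)
    finally show ?thesis by simp
  qed
  define X :: "('a + nat \<times> nat) set" where "X = Inr ` ({..<p} \<times> {..<t-1})"
  have cardX: "card X = p * (t - 1)" unfolding X_def
    by (simp add: card_image card_cartesian_product)
  have XK: "X \<in> K"
    unfolding K_def clique_free_complex_def
  proof (intro CollectI conjI notI)
    show "X \<subseteq> WV" unfolding X_def WV_def whisker_vertices_def by auto
  next
    assume "\<exists>S. S \<subseteq> X \<and> card S = t \<and> is_clique WV WE S"
    then obtain S where S: "S \<subseteq> X" "card S = t" "is_clique WV WE S" by blast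
    then have "S \<noteq> {}" using assms(3) by auto
    then obtain s where s: "s \<in> S" by auto
    then obtain i j where ij: "s = Inr (i, j)" "i < p" "j < t - 1" using S(1) X_def by auto
    have "S \<subseteq> Inr ` ({i} \<times> {..<t-1})"
    proof
      fix y assume y: "y \<in> S"
      then obtain i' j' where y': "y = Inr (i', j')" "j' < t - 1" using S(1) X_def by auto
      show "y \<in> Inr ` ({i} \<times> {..<t-1})"
      proof (cases "y = s")
        case True thus ?thesis using ij by auto
      next
        case False
        hence "WE s y" using S(3) s y by (auto simp: is_clique_def)
        thus ?thesis using ij y' by (auto simp: WE_def)
      qed
    qed
    hence "card S \<le> card (Inr ` ({i} \<times> {..<t-1}) :: ('a + nat \<times> nat) set)"
      by (intro card_mono) auto
    also have "\<dots> = t - 1" by (simp add: card_image card_cartesian_product)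
    finally show False using S(2) assms(3) by simp
  qed
  have finK: "finite K"
  proof -
    have "K \<subseteq> Pow WV" using Ksub by auto
    thus ?thesis using finWV by (meson finite_Pow_iff finite_subset)
  qed
  have dim: "complex_dim K = int p * (int t - 1) - 1"
    unfolding complex_dim_def
  proof (rule Max_eqI)
    show "finite ((\<lambda>F. int (card F) - 1) ` K)" using finK by simp
  next
    fix y assume "y \<in> (\<lambda>F. int (card F) - 1) ` K"
    then obtain F where "F \<in> K" "y = int (card F) - 1" by auto
    have "int (card F) \<le> int (p * (t - 1))" using Kcard[OF \<open>F \<in> K\<close>] by (simp only: of_nat_le_iff)
    also have "int (p * (t - 1)) = int p * (int t - 1)" using assms(3) by (simp add: of_nat_diff)
    finally show "y \<le> int p * (int t - 1) - 1" using \<open>y = _\<close> by simp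
  next
    show "int p * (int t - 1) - 1 \<in> (\<lambda>F. int (card F) - 1) ` K"
      using XK cardX assms(3) by (intro image_eqI[of _ _ X]) (auto simp: of_nat_diff)
  qed
  have facet_card: "card F = p * (t - 1)" if "F \<in> facets K" for F
  proof (rule ccontr)
    assume ne: "card F \<noteq> p * (t - 1)"
    have FK: "F \<in> K" and maxF: "\<And>G. G \<in> K \<Longrightarrow> F \<subseteq> G \<Longrightarrow> G = F"
      using that by (auto simp: facets_def)
    have lt: "card F < p * (t - 1)" using Kcard[OF FK] ne by simp
    have "\<exists>i<p. card (F \<inter> B i) < t - 1"
    proof (rule ccontr)
      assume "\<not> ?thesis"
      hence "(\<Sum>i<(p::nat). t - 1) \<le> (\<Sum>i<p. card (F \<inter> B i))"
        by (intro sum_mono) auto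
      thus False using cardF[OF Ksub[OF FK]] lt by simp
    qed
    then obtain i where i: "i < p" "card (F \<inter> B i) < t - 1" by auto
    have "\<exists>j<t-1. Inr (i, j) \<notin> F"
    proof (rule ccontr)
      assume "\<not> ?thesis"
      hence "Inr ` ({i} \<times> {..<t-1}) \<subseteq> F \<inter> B i" unfolding B_def by auto
      hence "card (Inr ` ({i} \<times> {..<t-1}) :: ('a + nat \<times> nat) set) \<le> card (F \<inter> B i)"
        using finB[OF i(1)] by (intro card_mono) auto
      thus False using i(2) by (simp add: card_image card_cartesian_product)
    qed
    then obtain j where j: "j < t - 1" "Inr (i, j) \<notin> F" by auto
    define x where "x = (Inr (i, j) :: 'a + nat \<times> nat)"
    have xB: "x \<in> B i" unfolding x_def B_def using j by auto
    have "insert x F \<in> K"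
      unfolding K_def clique_free_complex_def
    proof (intro CollectI conjI notI)
      show "insert x F \<subseteq> WV" using Ksub[OF FK] xB WVB i by auto
    next
      assume "\<exists>S. S \<subseteq> insert x F \<and> card S = t \<and> is_clique WV WE S"
      then obtain S where S: "S \<subseteq> insert x F" "card S = t" "is_clique WV WE S" by blast
      show False
      proof (cases "x \<in> S")
        case False
        hence "S \<subseteq> F" using S(1) by auto
        thus False using FK S unfolding K_def clique_free_complex_def by auto
      next
        case True
        have sub: "S - {x} \<subseteq> F \<inter> B i"
        proof
          fix y assume y: "y \<in> S - {x}"
          hence yF: "y \<in> F" using S(1) by auto
          have "WE x y" using S(3) y True by (auto simp: is_clique_def)
          hence "y \<in> B i" unfolding x_def WE_def B_def
            by (cases y) auto
          thus "y \<in> F \<inter> B i" using yF by auto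
        qed
        have "finite S" using S(2) assms(3) by (metis card.infinite not_numeral_le_zero)
        hence "card (S - {x}) = t - 1" using True S(2) by simp
        moreover have "card (S - {x}) \<le> card (F \<inter> B i)"
          using sub finB[OF i(1)] by (intro card_mono) auto
        ultimately show False using i(2) by simp
      qed
    qed
    hence "insert x F = F" using maxF by auto
    thus False using j(2) x_def by auto
  qed
  have pure: "pure_complex K"
    unfolding pure_complex_def using facet_card by auto
  show ?thesis using dim pure unfolding K_def WV_def WE_def by simp
qed

end
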